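(* Let $\mathcal{E}_2$ be the genus-$2$ Goeritz group of the $3$-sphere acting on $H_1(\Sigma_2)=H_1(\Sigma_2;\mathbb{Z})$. Then the coinvariant module vanishes: \[ H_1(\Sigma_2)_{\mathcal{E}_2} = 0 . \]
   Context: Let $S^3=H_2\cup H_2^*$ be a genus-$2$ Heegaard splitting with Heegaard surface $\Sigma_2=\partial H_2$. The genus-$2$ Goeritz group $\mathcal{E}_2$ is the group of isotopy classes $[f]$ of orientation-preserving homeomorphisms of $\Sigma_2$ for which there is an orientation-preserving self-homeomorphism $F$ of $S^3$ with $F(H_2)=H_2$ and $[F|_{\Sigma_2}]=[f]$; it acts on $H_1(\Sigma_2;\mathbb{Z})$ by induced maps. Fix a basis $x_1,x_2,y_1,y_2$ of $H_1(\Sigma_2;\mathbb{Z})$ (with $x_i$ meridian-type and $y_i$ longitude-type classes, $x_i\cdot y_i=1$). $\mathcal{E}_2$ is generated by four elements $\alpha,\beta,\gamma,\delta$ acting as follows: $\alpha_*(x_i)=-x_i$, $\alpha_*(y_i)=-y_i$ ($i=1,2$); $\beta_*(x_1)=x_1$, $\beta_*(x_2)=-x_2$, $\beta_*(y_1)=y_1$, $\beta_*(y_2)=-y_2$; $\gamma_*(x_1)=-x_2$, $\gamma_*(x_2)=-x_1$, $\gamma_*(y_1)=-y_2$, $\gamma_*(y_2)=-y_1$; $\delta_*(x_1)=-x_1+x_2$, $\delta_*(x_2)=-x_1$, $\delta_*(y_1)=y_2$, $\delta_*(y_2)=-y_1-y_2$. For a group $G$ and a left $G$-module $N$, the coinvariant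 module $N_G$ is the quotient of $N$ by the subgroup generated by $\{gn-n : g\in G,\ n\in N\}$. *)

theory Defs
  imports "HOL-Analysis.Analysis"
begin

text \<open>H_1(Sigma_2; Z) = Z^4 with coordinates w.r.t. the basis x1, x2, y1, y2
  (coordinate 1 = x1, 2 = x2, 3 = y1, 4 = y2).\<close>
type_synonym H1 = "int ^ 4"

definition alpha_act :: "H1 \<Rightarrow> H1" where
  "alpha_act v = vector [- (v$1), - (v$2), - (v$3), - (v$4)]"

definition beta_act :: "H1 \<Rightarrow> H1" where
  "beta_act v = vector [v$1, - (v$2), v$3, - (v$4)]"

definition gamma_act :: "H1 \<Rightarrow> H1" where
  "gamma_act v = vector [- (v$2), - (v$1), - (v$4), - (v$3)]"

text \<open>delta: x1 -> -x1+x2, x2 -> -x1, y1 -> y2, y2 -> -y1-y2, hence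
  a x1 + b x2 + c y1 + d y2 |-> (-a-b) x1 + a x2 - d y1 + (c-d) y2.\<close>
definition delta_act :: "H1 \<Rightarrow> H1" where
  "delta_act v = vector [- (v$1) - v$2, v$1, - (v$4), v$3 - v$4]"

definition goeritz_gens :: "(H1 \<Rightarrow> H1) set" where
  "goeritz_gens = {alpha_act, beta_act, gamma_act, delta_act}"

text \<open>The image of the Goeritz group E_2 in Aut(H_1): the group generated by the
  four generator actions (closed under composition with generators and their inverses).\<close>
inductive_set goeritz_image :: "(H1 \<Rightarrow> H1) set" where
  id_in: "id \<in> goeritz_image"
| gen_comp: "s \<in> goeritz_gens \<Longrightarrow> g \<in> goeritz_image \<Longrightarrow> s \<circ> g \<in> goeritz_image"
| inv_comp: "s \<in> goeritz_gens \<Longrightarrow> g \<in> goeritz_image \<Longrightarrow> inv s \<circ> g \<in> goeritz_image"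

inductive_set coinv_relations :: "H1 set" where
  rel: "g \<in> goeritz_image \<Longrightarrow> g n - n \<in> coinv_relations"
| zero: "0 \<in> coinv_relations"
| add: "a \<in> coinv_relations \<Longrightarrow> b \<in> coinv_relations \<Longrightarrow> a + b \<in> coinv_relations"
| neg: "a \<in> coinv_relations \<Longrightarrow> - a \<in> coinv_relations"

end

theory Submission
  imports Defs
begin

lemma gen_in: "s \<in> goeritz_gens \<Longrightarrow> s \<in> goeritz_image"
  using goeritz_image.gen_comp[OF _ goeritz_image.id_in] by simp

lemma R: "s \<in> goeritz_gens \<Longrightarrow> s n - n \<in> coinv_relations"
  by (rule coinv_relations.rel[OF gen_in])

lemma sub: "a \<in> coinv_relations \<Longrightarrow> b \<in> coinv_relations \<Longrightarrow> a - b \<in> coinv_relations"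
  using coinv_relations.add coinv_relations.neg by (metis diff_conv_add_uminus)

lemma smul_nat: "a \<in> coinv_relations \<Longrightarrow> int k *s a \<in> coinv_relations"
  by (induction k) (auto simp: vector_sadd_rdistrib intro: coinv_relations.zero coinv_relations.add)

lemma smul: "a \<in> coinv_relations \<Longrightarrow> (k::int) *s (a::H1) \<in> coinv_relations"
proof (cases "k \<ge> 0")
  case True
  assume a: "a \<in> coinv_relations"
  then show ?thesis using smul_nat[OF a, of "nat k"] True by simp
next
  case False
  assume a: "a \<in> coinv_relations"
  have "k *s a = - (int (nat (-k)) *s a)" using False by (simp add: vec_eq_iff)
  then show ?thesis using smul_nat[OF a, of "nat (-k)"] coinv_relations.neg by metis
qed

lemma vec_eq4: "(v::H1) = w \<longleftrightarrow> v$1 = w$1 \<and> v$2 = w$2 \<and> v$3 = w$3 \<and> v$4 = w$4"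
  by (metis (mono_tags) exhaust_4 vec_eq_iff)

lemma vector_4 [simp]:
 "(vector [x,y,z,w] ::('a::zero)^4)$1 = x"
 "(vector [x,y,z,w] ::('a::zero)^4)$2 = y"
 "(vector [x,y,z,w] ::('a::zero)^4)$3 = z"
 "(vector [x,y,z,w] ::('a::zero)^4)$4 = w"
  unfolding vector_def by simp_all

abbreviation V where "V a b c d \<equiv> (vector [a,b,c,d] :: H1)"

lemma Vin: "s \<in> goeritz_gens \<Longrightarrow> s n - n = w \<Longrightarrow> w \<in> coinv_relations"
  using R by blast

lemma e1: "V 1 0 0 0 \<in> coinv_relations"
proof -
  have A: "V (-2) 0 0 0 \<in> coinv_relations"
    by (rule Vin[of alpha_act "V 1 0 0 0"]) (auto simp: goeritz_gens_def alpha_act_def vec_eq4)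
  have B: "V (-2) 1 0 0 \<in> coinv_relations"
    by (rule Vin[of delta_act "V 1 0 0 0"]) (auto simp: goeritz_gens_def delta_act_def vec_eq4)
  have C: "V (-1) (-1) 0 0 \<in> coinv_relations"
    by (rule Vin[of delta_act "V 0 1 0 0"]) (auto simp: goeritz_gens_def delta_act_def vec_eq4)
  have "V 1 0 0 0 = V (-2) 0 0 0 - (V (-2) 1 0 0 + V (-1) (-1) 0 0)"
    by (auto simp: vec_eq4)
  then show ?thesis using sub coinv_relations.add A B C by metis
qed

lemma e2: "V 0 1 0 0 \<in> coinv_relations"
proof -
  have C: "V (-1) (-1) 0 0 \<in> coinv_relations"
    by (rule Vin[of delta_act "V 0 1 0 0"]) (auto simp: goeritz_gens_def delta_act_def vec_eq4)
  have "V 0 1 0 0 = - (C' + V 1 0 0 0)" if "C' = V (-1) (-1) 0 0" for C'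
    using that by (auto simp: vec_eq4)
  then show ?thesis using coinv_relations.neg coinv_relations.add C e1 by metis
qed

lemma e4: "V 0 0 0 1 \<in> coinv_relations"
proof -
  have A: "V 0 0 0 (-2) \<in> coinv_relations"
    by (rule Vin[of alpha_act "V 0 0 0 1"]) (auto simp: goeritz_gens_def alpha_act_def vec_eq4)
  have B: "V 0 0 (-1) 1 \<in> coinv_relations"
    by (rule Vin[of delta_act "V 0 0 1 0"]) (auto simp: goeritz_gens_def delta_act_def vec_eq4)
  have C: "V 0 0 (-1) (-2) \<in> coinv_relations"
    by (rule Vin[of delta_act "V 0 0 0 1"]) (auto simp: goeritz_gens_def delta_act_def vec_eq4)
  have "V 0 0 0 1 = (V 0 0 (-1) 1 - V 0 0 (-1) (-2)) + V 0 0 0 (-2)"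
    by (auto simp: vec_eq4)
  then show ?thesis using sub coinv_relations.add A B C by metis
qed

lemma e3: "V 0 0 1 0 \<in> coinv_relations"
proof -
  have B: "V 0 0 (-1) 1 \<in> coinv_relations"
    by (rule Vin[of delta_act "V 0 0 1 0"]) (auto simp: goeritz_gens_def delta_act_def vec_eq4)
  have "V 0 0 1 0 = V 0 0 0 1 - B'" if "B' = V 0 0 (-1) 1" for B'
    using that by (auto simp: vec_eq4)
  then show ?thesis using sub B e4 by metis
qed

theorem lemma2p1:
  shows "coinv_relations = (UNIV :: H1 set)"
proof -
  have "v \<in> coinv_relations" for v :: H1
  proof -
    have "v = (v$1) *s V 1 0 0 0 + (v$2) *s V 0 1 0 0
            + (v$3) *s V 0 0 1 0 + (v$4) *s V 0 0 0 1"
      by (auto simp: vec_eq4)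
    then show ?thesis using smul e1 e2 e3 e4 coinv_relations.add by metis
  qed
  then show ?thesis by auto
qed

end
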